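(* Consider the payment mechanism that, given submissions $X_1',\dots,X_m'$, computes the losses $L_i\in[0,1]$ of Algorithm 2 (described below) and pays agent $i$ the amount $\pi_i=\frac Bm(1-L_i)$, where $B>0$ is a fixed budget. Then this mechanism is individually rational ($\pi_i\ge0$ for all $i$ always), budget feasible ($\sum_i\pi_i\le B$ always), and truthful: for every $i$ and strategy $f_i$, $\mathbb E[\pi_i(\mathrm{id},\dots,\mathrm{id})]\ge\mathbb E[\pi_i(f_i,(\mathrm{id})_{j\ne i})]$.
   Context: Algorithm 2. Fix $m\ge2$ agents and a measurable data space $\mathcal X$. A prior $\Pi$ is a probability distribution over probability distributions on $\mathcal X$; $D\sim\Pi$; conditionally on $D$, agent $i$ holds $X_i=(X_{i,1},\dots,X_{i,n_i})$ i.i.d. from $D$, independent across agents. A strategy is a measurable map $f:\bigcup_{\ell\ge0}\mathcal X^\ell\to\bigcup_{\ell\ge0}\mathcal X^\ell$; agent $i$ submits $X_i'=f_i(X_i)$; $\mathrm{id}$ is the identity. Feature maps $\varphi_1,\dots,\varphi_K:\mathcal X\to\mathbb R$ are measurable; $\varphi_k(S)=\{\varphi_k(x):x\in S\}$; $F_S(t)=\frac1{|S|}\sum_{s\in S}\mathbf 1\{s\le t\}$. For $k\in[K],j\ge0,r\ge1$, $h^{(k)}_{j,r}:\mathcal X^j\times\mathbb R\to[0,1]$ is measurable with $h^{(k)}_{j,r}(Y_1,\dots,Y_j,\varphi_k(T))=\mathbb E[F_{\varphi_k(\{Z_1,\dots,Z_r\})}(\varphi_k(T))\mid Y_1,\dots,Y_j,\varphi_k(T)]$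 a.s. whenever $D\sim\Pi$ and, given $D$, $Y_1,\dots,Y_j,T,Z_1,\dots,Z_r$ are i.i.d. from $D$. For each $i$: $X'_{-i}=\bigcup_{j\ne i}X'_j$ (at least 2 elements), $T_i$ uniformly random from $X'_{-i}$, $Z_i=X'_{-i}\setminus\{T_i\}$, $L_i=\frac1K\sum_k\big(h^{(k)}_{|X_i'|,|Z_i|}(X_i',\varphi_k(T_i))-F_{\varphi_k(Z_i)}(\varphi_k(T_i))\big)^2$. Expectations are over $D\sim\Pi$, data and all randomness. *)

theory Defs
  imports "HOL-Probability.Probability"
begin

text \<open>Datasets are finite lists (multisets with order) of points of the data space.\<close>

definition list_tuple :: "nat \<Rightarrow> 'a list \<Rightarrow> (nat \<Rightarrow> 'a)" where
  "list_tuple l ys = restrict (\<lambda>k. ys ! k) {..<l}"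

definition tuple_list :: "nat \<Rightarrow> (nat \<Rightarrow> 'a) \<Rightarrow> 'a list" where
  "tuple_list l y = map y [0..<l]"

definition listM :: "'a measure \<Rightarrow> 'a list measure" where
  "listM X = sigma (lists (space X))
     (\<Union>l. {{ys \<in> lists (space X). length ys = l \<and> list_tuple l ys \<in> A} | A.
              A \<in> sets (PiM {..<l} (\<lambda>_. X))})"

definition strategy :: "'a measure \<Rightarrow> ('a list \<Rightarrow> 'a list) \<Rightarrow> bool" where
  "strategy X f \<longleftrightarrow> (\<forall>l. (\<lambda>y. f (tuple_list l y)) \<in> measurable (PiM {..<l} (\<lambda>_. X)) (listM X))"

definition ecdf :: "real list \<Rightarrow> real \<Rightarrow> real" where
  "ecdf S t = real (length (filter (\<lambda>s. s \<le> t) S)) / real (length S)"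

text \<open>X'_{-i}: the pooled submissions of all agents j \<noteq> i (agents are 0..m-1).\<close>
definition others :: "nat \<Rightarrow> (nat \<Rightarrow> 'a list) \<Rightarrow> nat \<Rightarrow> 'a list" where
  "others m xs i = concat (map xs (filter (\<lambda>j. j \<noteq> i) [0..<m]))"

definition remove_at :: "nat \<Rightarrow> 'a list \<Rightarrow> 'a list" where
  "remove_at t zs = take t zs @ drop (Suc t) zs"

text \<open>The loss L_i of Algorithm 2 when the test point T_i is the t-th element of X'_{-i}.
  h k j r ys v stands for h^{(k)}_{j,r}(ys, v).\<close>
definition loss ::
  "nat \<Rightarrow> (nat \<Rightarrow> 'a \<Rightarrow> real) \<Rightarrow> (nat \<Rightarrow> nat \<Rightarrow> nat \<Rightarrow> 'a list \<Rightarrow> real \<Rightarrow> real)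
   \<Rightarrow> nat \<Rightarrow> (nat \<Rightarrow> 'a list) \<Rightarrow> nat \<Rightarrow> nat \<Rightarrow> real" where
  "loss K \<phi> h m xs i t =
     (let T = others m xs i ! t; Z = remove_at t (others m xs i) in
      (1 / real K) * (\<Sum>k<K. (h k (length (xs i)) (length Z) (xs i) (\<phi> k T)
                               - ecdf (map (\<phi> k) Z) (\<phi> k T))\<^sup>2))"

definition payment ::
  "real \<Rightarrow> nat \<Rightarrow> (nat \<Rightarrow> 'a \<Rightarrow> real) \<Rightarrow> (nat \<Rightarrow> nat \<Rightarrow> nat \<Rightarrow> 'a list \<Rightarrow> real \<Rightarrow> real)
   \<Rightarrow> nat \<Rightarrow> (nat \<Rightarrow> 'a list) \<Rightarrow> nat \<Rightarrow> nat \<Rightarrow> real" where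
  "payment B K \<phi> h m xs i t = B / real m * (1 - loss K \<phi> h m xs i t)"

text \<open>Expected payment of agent i (over T_i uniform in X'_{-i}, the data given D, and D \<sim> Prior)
  when agents use strategy profile fs and agent j holds n j points.\<close>
definition expected_payment ::
  "'a measure measure \<Rightarrow> nat \<Rightarrow> (nat \<Rightarrow> nat) \<Rightarrow> (nat \<Rightarrow> 'a list \<Rightarrow> 'a list)
   \<Rightarrow> real \<Rightarrow> nat \<Rightarrow> (nat \<Rightarrow> 'a \<Rightarrow> real) \<Rightarrow> (nat \<Rightarrow> nat \<Rightarrow> nat \<Rightarrow> 'a list \<Rightarrow> real \<Rightarrow> real)
   \<Rightarrow> nat \<Rightarrow> real" where
  "expected_payment Prior m n fs B K \<phi> h i =
     (\<integral>D. (\<integral>\<omega>. (let xs = (\<lambda>j. fs j (tuple_list (n j) (\<omega> j))) in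
                  (\<Sum>t<length (others m xs i). payment B K \<phi> h m xs i t)
                    / real (length (others m xs i)))
             \<partial>(PiM {..<m} (\<lambda>j. PiM {..<n j} (\<lambda>_. D)))) \<partial>Prior)"

text \<open>The defining property of h^{(k)}_{j,r}: with D \<sim> Prior and, given D,
  Y_1..Y_j, T, Z_1..Z_r i.i.d. from D (coordinates 0..j-1, j, j+1..j+r),
  h(Y, phi_k(T)) is a version of E[F_{phi_k(Z)}(phi_k(T)) | Y, phi_k(T)].\<close>
definition iid_experiment :: "'a measure \<Rightarrow> 'a measure measure \<Rightarrow> nat \<Rightarrow> (nat \<Rightarrow> 'a) measure" where
  "iid_experiment X Prior N = Prior \<bind> (\<lambda>D. PiM {..<N} (\<lambda>_. D))"

definition is_cond_cdf ::
  "'a measure \<Rightarrow> 'a measure measure \<Rightarrow> ('a \<Rightarrow> real) \<Rightarrow> nat \<Rightarrow> nat \<Rightarrow> ('a list \<Rightarrow> real \<Rightarrow> real) \<Rightarrow> bool" where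
  "is_cond_cdf X Prior \<phi> j r g \<longleftrightarrow>
     (let M = iid_experiment X Prior (j + 1 + r);
          V = (\<lambda>\<omega>. (list_tuple j (tuple_list j \<omega>), \<phi> (\<omega> j)));
          Fz = (\<lambda>\<omega>. ecdf (map (\<lambda>q. \<phi> (\<omega> q)) [j+1..<j+1+r]) (\<phi> (\<omega> j)))
      in AE \<omega> in M. g (tuple_list j \<omega>) (\<phi> (\<omega> j)) =
           real_cond_exp M (vimage_algebra (space M) V (PiM {..<j} (\<lambda>_. X) \<Otimes>\<^sub>M borel)) Fz \<omega>)"

end

theory Submission
  imports Defs
begin


definition idx :: "nat \<Rightarrow> (nat \<Rightarrow> nat) \<Rightarrow> nat \<Rightarrow> (nat \<times> nat) list" where
  "idx m n i = concat (map (\<lambda>j. map (\<lambda>b. (j, b)) [0..<n j]) (filter (\<lambda>j. j \<noteq> i) [0..<m]))"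

definition Lt :: "nat \<Rightarrow> (nat \<Rightarrow> nat) \<Rightarrow> nat \<Rightarrow> nat \<Rightarrow> (nat \<times> nat) list" where
  "Lt m n i t = map (\<lambda>b. (i, b)) [0..<n i] @ [idx m n i ! t] @ remove_at t (idx m n i)"

definition rho :: "nat \<Rightarrow> (nat \<Rightarrow> nat) \<Rightarrow> nat \<Rightarrow> nat \<Rightarrow> (nat \<Rightarrow> nat \<Rightarrow> 'a) \<Rightarrow> nat \<Rightarrow> 'a" where
  "rho m n i t \<omega> = (\<lambda>q\<in>{..<length (Lt m n i t)}. \<omega> (fst (Lt m n i t ! q)) (snd (Lt m n i t ! q)))"

lemma length_remove_at: "t < length zs \<Longrightarrow> length (remove_at t zs) = length zs - 1"
  unfolding remove_at_def by simp

lemma remove_at_map: "remove_at t (map g zs) = map g (remove_at t zs)"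
  unfolding remove_at_def by (simp add: take_map drop_map)

lemma mset_remove_at: "t < length zs \<Longrightarrow> mset (zs ! t # remove_at t zs) = mset zs"
proof -
  assume t: "t < length zs"
  have "zs = take t zs @ zs ! t # drop (Suc t) zs" using t by (simp add: id_take_nth_drop)
  then have "mset zs = mset (take t zs) + add_mset (zs ! t) (mset (drop (Suc t) zs))"
    by (metis mset.simps(2) mset_append)
  then show ?thesis unfolding remove_at_def by simp
qed

lemma others_eq:
  assumes "\<forall>j. j \<noteq> i \<longrightarrow> fs j = id"
  shows "others m (\<lambda>j. fs j (tuple_list (n j) (\<omega> j))) i = map (\<lambda>p. \<omega> (fst p) (snd p)) (idx m n i)"
proof -
  have "map (\<lambda>j. fs j (tuple_list (n j) (\<omega> j))) (filter (\<lambda>j. j \<noteq> i) [0..<m])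
      = map (\<lambda>j. map (\<lambda>p. \<omega> (fst p) (snd p)) (map (\<lambda>b. (j, b)) [0..<n j])) (filter (\<lambda>j. j \<noteq> i) [0..<m])"
  proof (rule map_cong[OF refl])
    fix j assume "j \<in> set (filter (\<lambda>j. j \<noteq> i) [0..<m])"
    then have "fs j = id" using assms by simp
    then show "fs j (tuple_list (n j) (\<omega> j)) = map (\<lambda>p. \<omega> (fst p) (snd p)) (map (\<lambda>b. (j, b)) [0..<n j])"
      by (simp add: tuple_list_def)
  qed
  then show ?thesis unfolding others_def idx_def map_concat by (simp only: map_map comp_def)
qed

lemma length_idx: "length (idx m n i) = (\<Sum>j\<in>{..<m} - {i}. n j)"
proof -
  have "length (idx m n i) = sum_list (map n (filter (\<lambda>j. j \<noteq> i) [0..<m]))"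
    unfolding idx_def by (simp add: length_concat comp_def)
  also have "\<dots> = sum n (set (filter (\<lambda>j. j \<noteq> i) [0..<m]))"
    by (rule sum_list_distinct_conv_sum_set) simp
  also have "set (filter (\<lambda>j. j \<noteq> i) [0..<m]) = {..<m} - {i}" by auto
  finally show ?thesis .
qed

lemma set_idx: "set (idx m n i) = Sigma ({..<m} - {i}) (\<lambda>j. {..<n j})"
  unfolding idx_def by auto

lemma distinct_idx: "distinct (idx m n i)"
  by (rule card_distinct) (simp add: set_idx length_idx card_SigmaI)

lemma length_Lt: "t < length (idx m n i) \<Longrightarrow> length (Lt m n i t) = n i + length (idx m n i)"
  unfolding Lt_def by (simp add: length_remove_at)

lemma mset_Lt: "t < length (idx m n i) \<Longrightarrow>
   mset (Lt m n i t) = mset (map (\<lambda>b. (i, b)) [0..<n i]) + mset (idx m n i)"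
  unfolding Lt_def using mset_remove_at[of t "idx m n i"] by simp

lemma distinct_Lt: "t < length (idx m n i) \<Longrightarrow> distinct (Lt m n i t)"
proof -
  assume t: "t < length (idx m n i)"
  have "distinct (map (\<lambda>b. (i, b)) [0..<n i] @ idx m n i)"
    using distinct_idx[of m n i] by (auto simp: distinct_map inj_on_def set_idx)
  moreover have "mset (map (\<lambda>b. (i, b)) [0..<n i] @ idx m n i) = mset (Lt m n i t)"
    using mset_Lt[OF t] by simp
  ultimately show ?thesis by (metis distinct_count_atmost_1 set_mset_mset)
qed

lemma set_Lt: "t < length (idx m n i) \<Longrightarrow> i < m \<Longrightarrow> set (Lt m n i t) = Sigma {..<m} (\<lambda>j. {..<n j})"
proof -
  assume t: "t < length (idx m n i)" and i: "i < m"
  have "set (Lt m n i t) = set_mset (mset (Lt m n i t))" by simp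
  also have "\<dots> = set (map (\<lambda>b. (i, b)) [0..<n i]) \<union> set (idx m n i)"
    unfolding mset_Lt[OF t] by simp
  also have "\<dots> = Sigma {..<m} (\<lambda>j. {..<n j})" using i unfolding set_idx by auto
  finally show ?thesis .
qed

lemma map_nth_upt_drop: "map (\<lambda>q. xs ! q) [a..<length xs] = drop a xs"
  by (rule nth_equalityI) auto

lemma rho_props:
  fixes \<omega> :: "nat \<Rightarrow> nat \<Rightarrow> 'a"
  assumes t: "t < length (idx m n i)"
  defines "Ob \<equiv> map (\<lambda>p. \<omega> (fst p) (snd p)) (idx m n i)"
  defines "r \<equiv> length (idx m n i) - 1"
  shows "tuple_list (n i) (rho m n i t \<omega>) = tuple_list (n i) (\<omega> i)"
    and "rho m n i t \<omega> (n i) = Ob ! t"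
    and "map (\<lambda>q. g (rho m n i t \<omega> q)) [n i + 1..<n i + 1 + r] = map g (remove_at t Ob)"
proof -
  define W where "W = map (\<lambda>p. \<omega> (fst p) (snd p)) (Lt m n i t)"
  have W: "W = tuple_list (n i) (\<omega> i) @ [Ob ! t] @ remove_at t Ob"
    unfolding W_def Lt_def Ob_def tuple_list_def using t by (simp add: remove_at_map)
  have lW: "length W = n i + 1 + r" unfolding W_def r_def using t by (simp add: length_Lt)
  have rw: "rho m n i t \<omega> q = W ! q" if "q < length W" for q
    using that unfolding rho_def W_def by simp
  show "tuple_list (n i) (rho m n i t \<omega>) = tuple_list (n i) (\<omega> i)"
    unfolding tuple_list_def using lW
    by (auto simp: rw W nth_append tuple_list_def intro!: map_cong)
  show "rho m n i t \<omega> (n i) = Ob ! t"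
    using lW by (simp add: rw W nth_append tuple_list_def)
  have "map (\<lambda>q. g (rho m n i t \<omega> q)) [n i + 1..<n i + 1 + r] = map g (map (\<lambda>q. W ! q) [n i + 1..<length W])"
    using lW by (auto simp: rw)
  also have "\<dots> = map g (remove_at t Ob)"
    unfolding map_nth_upt_drop W by (simp add: tuple_list_def)
  finally show "map (\<lambda>q. g (rho m n i t \<omega> q)) [n i + 1..<n i + 1 + r] = map g (remove_at t Ob)" .
qed



lemma flatten_measurable:
  fixes L :: "(nat \<times> nat) list"
  assumes L: "set L = Sigma {..<m} (\<lambda>j. {..<n j})"
  shows "(\<lambda>\<omega>. \<lambda>q\<in>{..<length L}. \<omega> (fst (L!q)) (snd (L!q)))
     \<in> measurable (PiM {..<m} (\<lambda>j. PiM {..<n j} (\<lambda>_. D))) (PiM {..<length L} (\<lambda>_. D))"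
proof (rule measurable_restrict)
  fix q assume q: "q \<in> {..<length L}"
  then have "L ! q \<in> set L" by simp
  then have "L ! q \<in> Sigma {..<m} (\<lambda>j. {..<n j})" using L by simp
  then have a: "fst (L!q) \<in> {..<m}" and b: "snd (L!q) \<in> {..<n (fst (L!q))}" by (cases "L!q"; simp)+
  show "(\<lambda>\<omega>. \<omega> (fst (L!q)) (snd (L!q))) \<in> measurable (PiM {..<m} (\<lambda>j. PiM {..<n j} (\<lambda>_. D))) D"
    by (rule measurable_compose[OF measurable_component_singleton[OF a, of "\<lambda>j. PiM {..<n j} (\<lambda>_. D)"]
        measurable_component_singleton[OF b, of "\<lambda>_. D"]])
qed


lemma distr_flatten:
  fixes L :: "(nat \<times> nat) list"
  assumes Ld: "distinct L" and L: "set L = Sigma {..<m} (\<lambda>j. {..<n j})" and D: "prob_space D"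
  shows "distr (PiM {..<m} (\<lambda>j. PiM {..<n j} (\<lambda>_. D))) (PiM {..<length L} (\<lambda>_. D))
           (\<lambda>\<omega>. \<lambda>q\<in>{..<length L}. \<omega> (fst (L!q)) (snd (L!q))) = PiM {..<length L} (\<lambda>_. D)"
    (is "distr ?P ?Q ?\<Phi> = _")
proof -
  interpret P0: product_sigma_finite "\<lambda>_. D"
    by (rule product_sigma_finite.intro, rule prob_space_imp_sigma_finite[OF D])
  interpret P1: product_sigma_finite "\<lambda>j. PiM {..<n j} (\<lambda>_. D)"
    by (rule product_sigma_finite.intro, rule prob_space_imp_sigma_finite, rule prob_space_PiM, rule D)
  define N where "N = length L"
  define pos where "pos = the_inv_into {..<N} (nth L)"
  have bij: "bij_betw (nth L) {..<N} (Sigma {..<m} (\<lambda>j. {..<n j}))"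
    using bij_betw_nth[OF Ld refl refl] L unfolding N_def by simp
  have inj: "inj_on (nth L) {..<N}" and img: "nth L ` {..<N} = Sigma {..<m} (\<lambda>j. {..<n j})"
    using bij unfolding bij_betw_def by auto
  have pos1: "pos (L ! q) = q" if "q < N" for q
    unfolding pos_def using inj that by (simp add: the_inv_into_f_f)
  have pos2: "pos p < N \<and> L ! pos p = p" if "p \<in> Sigma {..<m} (\<lambda>j. {..<n j})" for p
  proof
    have p: "p \<in> nth L ` {..<N}" using img that by simp
    show "pos p < N" unfolding pos_def using the_inv_into_into[OF inj p, of "{..<N}"] by simp
    show "L ! pos p = p" unfolding pos_def using f_the_inv_into_f[OF inj p] .
  qed
  have meas: "?\<Phi> \<in> measurable ?P ?Q" by (rule flatten_measurable[OF L])
  show ?thesis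
  proof (rule P0.PiM_eqI)
    show "finite {..<length L}" by simp
    show "sets (distr ?P ?Q ?\<Phi>) = sets ?Q" by simp
    fix A assume A: "\<And>q. q \<in> {..<length L} \<Longrightarrow> A q \<in> sets D"
    have Asub: "A q \<subseteq> space D" if "q < N" for q using sets.sets_into_space[OF A[of q]] that N_def by simp
    have pre: "?\<Phi> -` (Pi\<^sub>E {..<length L} A) \<inter> space ?P
        = Pi\<^sub>E {..<m} (\<lambda>j. Pi\<^sub>E {..<n j} (\<lambda>b. A (pos (j, b))))"
    proof (intro equalityI subsetI)
      fix \<omega> assume w: "\<omega> \<in> ?\<Phi> -` (Pi\<^sub>E {..<length L} A) \<inter> space ?P"
      show "\<omega> \<in> Pi\<^sub>E {..<m} (\<lambda>j. Pi\<^sub>E {..<n j} (\<lambda>b. A (pos (j, b))))"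
      proof -
        have sp: "\<omega> \<in> Pi\<^sub>E {..<m} (\<lambda>j. Pi\<^sub>E {..<n j} (\<lambda>_. space D))"
          using w by (simp add: space_PiM)
        have "\<omega> j b \<in> A (pos (j, b))" if "j < m" "b < n j" for j b
        proof -
          have p: "pos (j, b) < N" "L ! pos (j, b) = (j, b)" using pos2[of "(j,b)"] that by auto
          have "?\<Phi> \<omega> \<in> Pi\<^sub>E {..<length L} A" using w by simp
          from PiE_mem[OF this, of "pos (j,b)"] have "?\<Phi> \<omega> (pos (j,b)) \<in> A (pos (j, b))" using p N_def by simp
          then show ?thesis using p N_def by simp
        qed
        then show ?thesis using sp by (auto simp: PiE_iff)
      qed
    next
      fix \<omega> assume w: "\<omega> \<in> Pi\<^sub>E {..<m} (\<lambda>j. Pi\<^sub>E {..<n j} (\<lambda>b. A (pos (j, b))))"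
      have "Pi\<^sub>E {..<m} (\<lambda>j. Pi\<^sub>E {..<n j} (\<lambda>b. A (pos (j, b)))) \<subseteq> Pi\<^sub>E {..<m} (\<lambda>j. Pi\<^sub>E {..<n j} (\<lambda>_. space D))"
      proof (intro PiE_mono)
        fix j b assume "j \<in> {..<m}" "b \<in> {..<n j}"
        then have "pos (j, b) < N" using pos2[of "(j, b)"] by simp
        then show "A (pos (j, b)) \<subseteq> space D" by (rule Asub)
      qed
      then have "\<omega> \<in> space ?P"
        using w by (simp add: space_PiM subset_iff)
      moreover have "?\<Phi> \<omega> \<in> Pi\<^sub>E {..<length L} A"
      proof -
        have "\<omega> (fst (L!q)) (snd (L!q)) \<in> A q" if "q < length L" for q
        proof -
          have "L ! q \<in> Sigma {..<m} (\<lambda>j. {..<n j})" using that L nth_mem by blast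
          then have "\<omega> (fst (L!q)) (snd (L!q)) \<in> A (pos (fst (L!q), snd (L!q)))" using w by (auto simp: PiE_iff)
          then show ?thesis using pos1[of q] that N_def by simp
        qed
        then show ?thesis by auto
      qed
      ultimately show "\<omega> \<in> ?\<Phi> -` (Pi\<^sub>E {..<length L} A) \<inter> space ?P" by simp
    qed
    have "emeasure (distr ?P ?Q ?\<Phi>) (Pi\<^sub>E {..<length L} A) = emeasure ?P (?\<Phi> -` (Pi\<^sub>E {..<length L} A) \<inter> space ?P)"
      by (rule emeasure_distr[OF meas]) (use A in \<open>auto intro!: sets_PiM_I_finite\<close>)
    also have "\<dots> = (\<Prod>j\<in>{..<m}. emeasure (PiM {..<n j} (\<lambda>_. D)) (Pi\<^sub>E {..<n j} (\<lambda>b. A (pos (j, b)))))"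
      unfolding pre
      by (rule P1.emeasure_PiM) (use A pos2 N_def in \<open>auto intro!: sets_PiM_I_finite\<close>)
    also have "\<dots> = (\<Prod>j\<in>{..<m}. \<Prod>b\<in>{..<n j}. emeasure D (A (pos (j, b))))"
      by (rule prod.cong[OF refl], rule P0.emeasure_PiM) (use A pos2 N_def in auto)
    also have "\<dots> = (\<Prod>p\<in>Sigma {..<m} (\<lambda>j. {..<n j}). emeasure D (A (pos p)))"
      using prod.Sigma[of "{..<m}" "\<lambda>j. {..<n j}" "\<lambda>j b. emeasure D (A (pos (j,b)))"] by (simp add: split_def)
    also have "\<dots> = (\<Prod>q\<in>{..<N}. emeasure D (A (pos (L ! q))))"
      by (rule prod.reindex_bij_betw[OF bij, symmetric])
    also have "\<dots> = (\<Prod>q\<in>{..<length L}. emeasure D (A q))"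
      using pos1 N_def by simp
    finally show "emeasure (distr ?P ?Q ?\<Phi>) (Pi\<^sub>E {..<length L} A) = (\<Prod>q\<in>{..<length L}. emeasure D (A q))" .
  qed
qed



lemma measurable_emeasure_prob_algebra:
  "a \<in> sets A \<Longrightarrow> (\<lambda>M. emeasure M a) \<in> prob_algebra A \<rightarrow>\<^sub>M borel"
  unfolding prob_algebra_def by (intro measurable_restrict_space1 measurable_emeasure_subprob_algebra)

lemma iid_meas:
  assumes I: "finite I"
  shows "(\<lambda>D. PiM I (\<lambda>_. D)) \<in> measurable (prob_algebra X) (prob_algebra (PiM I (\<lambda>_. X)))"
proof (rule measurable_prob_algebra_generated[OF sets_PiM Int_stable_prod_algebra prod_algebra_sets_into_space])
  fix a assume a: "a \<in> space (prob_algebra X)"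
  then have pa: "prob_space a" and sa: "sets a = sets X" by (auto simp: space_prob_algebra)
  show "prob_space (PiM I (\<lambda>_. a))" by (rule prob_space_PiM) (use pa in auto)
  show "sets (PiM I (\<lambda>_. a)) = sets (PiM I (\<lambda>_. X))" by (rule sets_PiM_cong) (use sa in auto)
next
  fix A assume A: "A \<in> prod_algebra I (\<lambda>_. X)"
  then obtain E where AE: "A = Pi\<^sub>E I E" and E: "E \<in> (\<Pi> i\<in>I. sets X)"
    by (rule prod_algebraE_all)
  have "(\<lambda>a. \<Prod>i\<in>I. emeasure a (E i)) \<in> borel_measurable (prob_algebra X)"
    using E by (intro borel_measurable_prod_ennreal measurable_emeasure_prob_algebra) auto
  moreover have "emeasure (PiM I (\<lambda>_. a)) A = (\<Prod>i\<in>I. emeasure a (E i))" if a: "a \<in> space (prob_algebra X)" for a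
  proof -
    from a have pa: "prob_space a" and sa: "sets a = sets X" by (auto simp: space_prob_algebra)
    interpret P: product_sigma_finite "\<lambda>_. a"
      by (rule product_sigma_finite.intro, rule prob_space_imp_sigma_finite[OF pa])
    show ?thesis unfolding AE by (rule P.emeasure_PiM[OF I]) (use E sa in auto)
  qed
  ultimately show "(\<lambda>a. emeasure (PiM I (\<lambda>_. a)) A) \<in> borel_measurable (prob_algebra X)"
    by (subst measurable_cong) auto
qed



definition lgen :: "'a measure \<Rightarrow> 'a list set set" where
  "lgen X = (\<Union>l. {{ys \<in> lists (space X). length ys = l \<and> list_tuple l ys \<in> A} | A.
              A \<in> sets (PiM {..<l} (\<lambda>_. X))})"

lemma lgen_Pow: "lgen X \<subseteq> Pow (lists (space X))"
  unfolding lgen_def by auto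

lemma listM_eq: "listM X = sigma (lists (space X)) (lgen X)"
  unfolding listM_def lgen_def ..

lemma space_listM: "space (listM X) = lists (space X)"
  unfolding listM_eq using lgen_Pow by (rule space_measure_of)

lemma sets_listM: "sets (listM X) = sigma_sets (lists (space X)) (lgen X)"
  unfolding listM_eq using lgen_Pow by (rule sets_measure_of)

lemma lgen_in_sets:
  assumes "A \<in> sets (PiM {..<l} (\<lambda>_. X))"
  shows "{ys \<in> lists (space X). length ys = l \<and> list_tuple l ys \<in> A} \<in> sets (listM X)"
proof -
  have "{ys \<in> lists (space X). length ys = l \<and> list_tuple l ys \<in> A} \<in> lgen X"
    unfolding lgen_def using assms by blast
  then show ?thesis unfolding sets_listM by (rule sigma_sets.Basic)
qed

lemma list_tuple_space:
  assumes "ys \<in> lists (space X)" "length ys = l"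
  shows "list_tuple l ys \<in> space (PiM {..<l} (\<lambda>_. X))"
  using assms by (auto simp: space_PiM list_tuple_def PiE_iff)

lemma tuple_list_list_tuple: "length ys = l \<Longrightarrow> tuple_list l (list_tuple l ys) = ys"
  unfolding tuple_list_def list_tuple_def by (rule nth_equalityI) auto

lemma list_tuple_tuple_list:
  "y \<in> extensional {..<l} \<Longrightarrow> list_tuple l (tuple_list l y) = y"
  unfolding tuple_list_def list_tuple_def by (auto simp: extensional_def restrict_def fun_eq_iff)

lemma length_tuple_list[simp]: "length (tuple_list l y) = l"
  unfolding tuple_list_def by simp

lemma measurable_length_listM: "length \<in> measurable (listM X) (count_space UNIV)"
proof (subst measurable_count_space_eq2_countable, intro conjI ballI)
  show "length \<in> space (listM X) \<rightarrow> UNIV" by simp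
  fix l :: nat
  have "length -` {l} \<inter> space (listM X)
      = {ys \<in> lists (space X). length ys = l \<and> list_tuple l ys \<in> space (PiM {..<l} (\<lambda>_. X))}"
    by (auto simp: space_listM intro: list_tuple_space)
  also have "\<dots> \<in> sets (listM X)" by (rule lgen_in_sets) simp
  finally show "length -` {l} \<inter> space (listM X) \<in> sets (listM X)" .
qed

lemma measurable_list_tuple:
  "list_tuple l \<in> measurable (restrict_space (listM X) {ys. length ys = l}) (PiM {..<l} (\<lambda>_. X))"
proof (rule measurableI)
  fix ys assume "ys \<in> space (restrict_space (listM X) {ys. length ys = l})"
  then show "list_tuple l ys \<in> space (PiM {..<l} (\<lambda>_. X))"
    by (intro list_tuple_space) (auto simp: space_restrict_space space_listM)
next
  fix A assume A: "A \<in> sets (PiM {..<l} (\<lambda>_. X))"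
  have sp: "{ys. length ys = l} \<inter> space (listM X) \<in> sets (listM X)"
    using measurable_sets[OF measurable_length_listM, of "{l}"]
    by (simp add: vimage_def Int_commute Collect_conj_eq)
  have "list_tuple l -` A \<inter> space (restrict_space (listM X) {ys. length ys = l})
     = {ys \<in> lists (space X). length ys = l \<and> list_tuple l ys \<in> A}"
    by (auto simp: space_restrict_space space_listM)
  also have "\<dots> \<in> sets (restrict_space (listM X) {ys. length ys = l})"
    using lgen_in_sets[OF A] by (subst sets_restrict_space_iff[OF sp]) auto
  finally show "list_tuple l -` A \<inter> space (restrict_space (listM X) {ys. length ys = l})
      \<in> sets (restrict_space (listM X) {ys. length ys = l})" .
qed

lemma measurable_length_dep:
  fixes H :: "nat \<Rightarrow> 'a list \<Rightarrow> real \<Rightarrow> real"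
  assumes H: "\<And>l. (\<lambda>(y, v). H l (tuple_list l y) v) \<in> borel_measurable (PiM {..<l} (\<lambda>_. X) \<Otimes>\<^sub>M borel)"
  shows "(\<lambda>(ys, v). H (length ys) ys v) \<in> borel_measurable (listM X \<Otimes>\<^sub>M borel)"
proof -
  define F where "F l = (\<lambda>p::'a list \<times> real. if length (fst p) = l then H l (fst p) (snd p) else 0)" for l
  have "(\<lambda>p. F (length (fst p)) p) \<in> borel_measurable (listM X \<Otimes>\<^sub>M borel)"
  proof (rule measurable_compose_countable)
    show "(\<lambda>p. length (fst p)) \<in> listM X \<Otimes>\<^sub>M borel \<rightarrow>\<^sub>M count_space UNIV"
      by (rule measurable_compose[OF measurable_fst measurable_length_listM])
    fix l
    have sp: "{p \<in> space (listM X \<Otimes>\<^sub>M borel). length (fst p) = l} \<in> sets (listM X \<Otimes>\<^sub>M borel)"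
    proof -
      have "(\<lambda>p. length (fst p)) -` {l} \<inter> space (listM X \<Otimes>\<^sub>M borel) \<in> sets (listM X \<Otimes>\<^sub>M borel)"
        by (rule measurable_sets[OF measurable_compose[OF measurable_fst measurable_length_listM]]) simp
      then show ?thesis by (simp add: vimage_def Int_def conj_commute)
    qed
    let ?R = "restrict_space (listM X \<Otimes>\<^sub>M borel) {p. length (fst p) = l}"
    have m1: "(\<lambda>p. list_tuple l (fst p)) \<in> measurable ?R (PiM {..<l} (\<lambda>_. X))"
      by (rule measurable_compose[OF measurable_restrict_space3[OF measurable_fst] measurable_list_tuple])
         auto
    have m2: "snd \<in> measurable ?R borel"
      by (rule measurable_restrict_space1[OF measurable_snd])
    have m3: "(\<lambda>p. (\<lambda>(y, v). H l (tuple_list l y) v) (list_tuple l (fst p), snd p)) \<in> borel_measurable ?R"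
      by (rule measurable_compose[OF measurable_Pair[OF m1 m2] H])
    have m4: "(\<lambda>p. H l (fst p) (snd p)) \<in> borel_measurable ?R"
      by (rule measurable_cong[THEN iffD1, OF _ m3])
         (auto simp: space_restrict_space tuple_list_list_tuple)
    show "F l \<in> borel_measurable (listM X \<Otimes>\<^sub>M borel)"
      unfolding F_def using sp m4 by (subst measurable_If_restrict_space_iff) auto
  qed
  moreover have "(\<lambda>p. F (length (fst p)) p) = (\<lambda>(ys, v). H (length ys) ys v)"
    by (auto simp: F_def fun_eq_iff)
  ultimately show ?thesis by simp
qed

lemma strategy_id: "strategy X id"
  unfolding strategy_def
proof
  fix l
  have sp: "tuple_list l y \<in> lists (space X) \<and> list_tuple l (tuple_list l y) = y"
    if "y \<in> space (PiM {..<l} (\<lambda>_. X))" for y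
  proof
    have "y \<in> Pi\<^sub>E {..<l} (\<lambda>_. space X)" using that by (simp add: space_PiM)
    then have ye: "y \<in> extensional {..<l}" and yy: "\<And>k. k < l \<Longrightarrow> y k \<in> space X" by (auto simp: PiE_iff)
    show "list_tuple l (tuple_list l y) = y" by (rule list_tuple_tuple_list[OF ye])
    show "tuple_list l y \<in> lists (space X)" using yy by (auto simp: tuple_list_def)
  qed
  show "(\<lambda>y. id (tuple_list l y)) \<in> PiM {..<l} (\<lambda>_. X) \<rightarrow>\<^sub>M listM X"
  proof (rule measurable_sigma_sets[OF sets_listM lgen_Pow])
    show "(\<lambda>y. id (tuple_list l y)) \<in> space (PiM {..<l} (\<lambda>_. X)) \<rightarrow> lists (space X)"
      using sp by (simp add: Pi_iff)
    fix S assume "S \<in> lgen X"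
    then obtain l' A where S: "S = {ys \<in> lists (space X). length ys = l' \<and> list_tuple l' ys \<in> A}"
      and A: "A \<in> sets (PiM {..<l'} (\<lambda>_. X))"
      unfolding lgen_def by blast
    show "(\<lambda>y. id (tuple_list l y)) -` S \<inter> space (PiM {..<l} (\<lambda>_. X)) \<in> sets (PiM {..<l} (\<lambda>_. X))"
    proof (cases "l' = l")
      case True
      have "(\<lambda>y. id (tuple_list l y)) -` S \<inter> space (PiM {..<l} (\<lambda>_. X)) = A \<inter> space (PiM {..<l} (\<lambda>_. X))"
      proof (intro equalityI subsetI)
        fix y assume a: "y \<in> (\<lambda>y. id (tuple_list l y)) -` S \<inter> space (PiM {..<l} (\<lambda>_. X))"
        then have y: "y \<in> space (PiM {..<l} (\<lambda>_. X))" and "list_tuple l (tuple_list l y) \<in> A"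
          unfolding S True by simp_all
        then show "y \<in> A \<inter> space (PiM {..<l} (\<lambda>_. X))" using sp[OF y] by simp
      next
        fix y assume a: "y \<in> A \<inter> space (PiM {..<l} (\<lambda>_. X))"
        then have y: "y \<in> space (PiM {..<l} (\<lambda>_. X))" by simp
        show "y \<in> (\<lambda>y. id (tuple_list l y)) -` S \<inter> space (PiM {..<l} (\<lambda>_. X))"
          using sp[OF y] a unfolding S True by simp
      qed
      then show ?thesis using A True by simp
    next
      case False
      then have "(\<lambda>y. id (tuple_list l y)) -` S \<inter> space (PiM {..<l} (\<lambda>_. X)) = {}"
        unfolding S by auto
      then show ?thesis by (metis sets.empty_sets)
    qed
  qed
qed

lemma strategy_dep:
  fixes H :: "nat \<Rightarrow> 'a list \<Rightarrow> real \<Rightarrow> real"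
  assumes f: "strategy X f"
  assumes H: "\<And>l. (\<lambda>(y, v). H l (tuple_list l y) v) \<in> borel_measurable (PiM {..<l} (\<lambda>_. X) \<Otimes>\<^sub>M borel)"
  shows "(\<lambda>(y, v). H (length (f (tuple_list j y))) (f (tuple_list j y)) v) \<in> borel_measurable (PiM {..<j} (\<lambda>_. X) \<Otimes>\<^sub>M borel)"
proof -
  have fm: "(\<lambda>y. f (tuple_list j y)) \<in> measurable (PiM {..<j} (\<lambda>_. X)) (listM X)"
    using f unfolding strategy_def by blast
  have "(\<lambda>p. (f (tuple_list j (fst p)), snd p)) \<in> measurable (PiM {..<j} (\<lambda>_. X) \<Otimes>\<^sub>M borel) (listM X \<Otimes>\<^sub>M borel)"
    by (rule measurable_Pair[OF measurable_compose[OF measurable_fst fm] measurable_snd])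
  from measurable_compose[OF this measurable_length_dep[OF H]]
  show ?thesis by (simp add: case_prod_beta')
qed



lemma cond_exp_ineq:
  fixes F a g :: "'b \<Rightarrow> real"
  assumes M: "prob_space M"
    and sub: "subalgebra M G"
    and Fm: "F \<in> borel_measurable M" and Fb: "\<And>x. x \<in> space M \<Longrightarrow> \<bar>F x\<bar> \<le> 1"
    and am: "a \<in> borel_measurable G" and ab: "\<And>x. x \<in> space M \<Longrightarrow> \<bar>a x\<bar> \<le> 1"
    and gm: "g \<in> borel_measurable G" and gb: "\<And>x. x \<in> space M \<Longrightarrow> \<bar>g x\<bar> \<le> 1"
    and ae: "AE x in M. a x = real_cond_exp M G F x"
  shows "(\<integral>x. (a x - F x)\<^sup>2 \<partial>M) \<le> (\<integral>x. (g x - F x)\<^sup>2 \<partial>M)"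
proof -
  interpret prob_space M by (rule M)
  interpret S: finite_measure_subalgebra M G
    by unfold_locales (rule sub)
  have am': "a \<in> borel_measurable M" by (rule measurable_from_subalg[OF sub am])
  have gm': "g \<in> borel_measurable M" by (rule measurable_from_subalg[OF sub gm])
  define d where "d x = g x - a x" for x
  have dm: "d \<in> borel_measurable G" unfolding d_def using am gm by measurable
  have dm': "d \<in> borel_measurable M" unfolding d_def using am' gm' by measurable
  have db: "\<bar>d x\<bar> \<le> 2" if "x \<in> space M" for x using ab[OF that] gb[OF that] unfolding d_def by linarith
  have bnd: "integrable M f" if "f \<in> borel_measurable M" "\<And>x. x \<in> space M \<Longrightarrow> \<bar>f x\<bar> \<le> C" for f :: "'b \<Rightarrow> real" and C :: real
    using that by (intro integrable_const_bound[where B=C]) auto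
  have i1: "integrable M (\<lambda>x. (a x - F x)\<^sup>2)"
  proof (rule bnd[of _ 4])
    show "(\<lambda>x. (a x - F x)\<^sup>2) \<in> borel_measurable M" using am' Fm by measurable
    fix x assume x: "x \<in> space M"
    have "\<bar>a x - F x\<bar> \<le> 2" using ab[OF x] Fb[OF x] by linarith
    then have "\<bar>a x - F x\<bar>\<^sup>2 \<le> 2\<^sup>2" by (intro power_mono) auto
    then show "\<bar>(a x - F x)\<^sup>2\<bar> \<le> 4" by simp
  qed
  have i2: "integrable M (\<lambda>x. (d x)\<^sup>2)"
  proof (rule bnd[of _ 4])
    show "(\<lambda>x. (d x)\<^sup>2) \<in> borel_measurable M" using dm' by measurable
    fix x assume x: "x \<in> space M"
    have "\<bar>d x\<bar>\<^sup>2 \<le> 2\<^sup>2" using db[OF x] by (intro power_mono) auto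
    then show "\<bar>(d x)\<^sup>2\<bar> \<le> 4" by simp
  qed
  have i3: "integrable M (\<lambda>x. d x * a x)"
  proof (rule bnd[of _ 2])
    show "(\<lambda>x. d x * a x) \<in> borel_measurable M" using dm' am' by measurable
    fix x assume x: "x \<in> space M"
    have "\<bar>d x\<bar> * \<bar>a x\<bar> \<le> 2 * 1" using db[OF x] ab[OF x] by (intro mult_mono) auto
    then show "\<bar>d x * a x\<bar> \<le> 2" by (simp add: abs_mult)
  qed
  have i4: "integrable M (\<lambda>x. d x * F x)"
  proof (rule bnd[of _ 2])
    show "(\<lambda>x. d x * F x) \<in> borel_measurable M" using dm' Fm by measurable
    fix x assume x: "x \<in> space M"
    have "\<bar>d x\<bar> * \<bar>F x\<bar> \<le> 2 * 1" using db[OF x] Fb[OF x] by (intro mult_mono) auto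
    then show "\<bar>d x * F x\<bar> \<le> 2" by (simp add: abs_mult)
  qed
  have "(\<integral>x. d x * a x \<partial>M) = (\<integral>x. d x * real_cond_exp M G F x \<partial>M)"
  proof (rule integral_cong_AE)
    show "(\<lambda>x. d x * a x) \<in> borel_measurable M" using dm' am' by measurable
    show "(\<lambda>x. d x * real_cond_exp M G F x) \<in> borel_measurable M" using dm' by measurable
    show "AE x in M. d x * a x = d x * real_cond_exp M G F x" using ae by eventually_elim simp
  qed
  also have "\<dots> = (\<integral>x. d x * F x \<partial>M)"
    by (rule S.real_cond_exp_intg(2)[OF i4 dm Fm])
  finally have key: "(\<integral>x. d x * a x \<partial>M) = (\<integral>x. d x * F x \<partial>M)" .
  have "(\<integral>x. (g x - F x)\<^sup>2 \<partial>M) = (\<integral>x. (a x - F x)\<^sup>2 + ((d x)\<^sup>2 + 2 * (d x * a x - d x * F x)) \<partial>M)"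
    by (rule Bochner_Integration.integral_cong) (auto simp: d_def power2_eq_square algebra_simps)
  also have "\<dots> = (\<integral>x. (a x - F x)\<^sup>2 \<partial>M) + ((\<integral>x. (d x)\<^sup>2 \<partial>M) + 2 * ((\<integral>x. d x * a x \<partial>M) - (\<integral>x. d x * F x \<partial>M)))"
    using i1 i2 i3 i4 by simp
  also have "\<dots> = (\<integral>x. (a x - F x)\<^sup>2 \<partial>M) + (\<integral>x. (d x)\<^sup>2 \<partial>M)"
    using key by simp
  also have "\<dots> \<ge> (\<integral>x. (a x - F x)\<^sup>2 \<partial>M)"
    using integral_nonneg_AE[of "\<lambda>x. (d x)\<^sup>2" M] by simp
  finally show ?thesis .
qed



lemma length_filter_sum: "length (filter P xs) = (\<Sum>x\<leftarrow>xs. if P x then 1 else 0)"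
  by (induct xs) auto

lemma ecdf_map_upt:
  "ecdf (map g [a..<b]) t = (\<Sum>q\<in>{a..<b}. if g q \<le> t then 1 else 0) / real (b - a)"
proof -
  have "real (length (filter (\<lambda>s. s \<le> t) (map g [a..<b]))) = (\<Sum>q\<in>{a..<b}. if g q \<le> t then 1 else 0)"
    unfolding length_filter_sum
    by (simp add: sum_set_upt_conv_sum_list_nat[symmetric] of_nat_sum comp_def) (rule sum.cong; simp)
  then show ?thesis unfolding ecdf_def by simp
qed

lemma ecdf_range: "0 \<le> ecdf S t \<and> ecdf S t \<le> 1"
  unfolding ecdf_def
  by (cases "length S = 0") (auto simp: divide_le_eq_1 length_filter_le)

lemma comp_meas:
  assumes "q < N" "\<phi> \<in> borel_measurable X"
  shows "(\<lambda>\<omega>. \<phi> (\<omega> q)) \<in> borel_measurable (PiM {..<N} (\<lambda>_. X))"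
proof -
  have "q \<in> {..<N}" using assms by simp
  from measurable_compose[OF measurable_component_singleton[OF this, of "\<lambda>_. X"] assms(2)]
  show ?thesis by simp
qed

lemma Fz_meas:
  assumes "\<phi> \<in> borel_measurable X"
  shows "(\<lambda>\<omega>. ecdf (map (\<lambda>q. \<phi> (\<omega> q)) [j+1..<j+1+r]) (\<phi> (\<omega> j))) \<in> borel_measurable (PiM {..<j+1+r} (\<lambda>_. X))"
proof -
  have e: "ecdf (map (\<lambda>q. \<phi> (\<omega> q)) [j+1..<j+1+r]) (\<phi> (\<omega> j)) =
     (\<Sum>q\<in>{j+1..<j+1+r}. if \<phi> (\<omega> q) \<le> \<phi> (\<omega> j) then 1 else 0) / real (j + 1 + r - (j + 1))" for \<omega>
    by (rule ecdf_map_upt)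
  have cj: "(\<lambda>\<omega>. \<phi> (\<omega> j)) \<in> borel_measurable (PiM {..<j+1+r} (\<lambda>_. X))"
    by (rule comp_meas) (use assms in auto)
  have "(\<lambda>\<omega>. (\<Sum>q\<in>{j+1..<j+1+r}. if \<phi> (\<omega> q) \<le> \<phi> (\<omega> j) then 1 else 0) / real (j + 1 + r - (j + 1)) :: real)
      \<in> borel_measurable (PiM {..<j+1+r} (\<lambda>_. X))"
  proof (intro borel_measurable_divide borel_measurable_sum borel_measurable_const)
    fix q assume "q \<in> {j+1..<j+1+r}"
    then have cq: "(\<lambda>\<omega>. \<phi> (\<omega> q)) \<in> borel_measurable (PiM {..<j+1+r} (\<lambda>_. X))"
      by (intro comp_meas) (use assms in auto)
    show "(\<lambda>\<omega>. if \<phi> (\<omega> q) \<le> \<phi> (\<omega> j) then 1 else 0 :: real) \<in> borel_measurable (PiM {..<j+1+r} (\<lambda>_. X))"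
      using cq cj by measurable
  qed
  then show ?thesis unfolding e .
qed

lemma main_ineq:
  fixes X :: "'a measure" and Prior :: "'a measure measure"
    and \<phi> :: "'a \<Rightarrow> real" and hh :: "nat \<Rightarrow> 'a list \<Rightarrow> real \<Rightarrow> real"
  assumes prior: "prob_space Prior" "sets Prior = sets (prob_algebra X)"
    and phi_meas: "\<phi> \<in> borel_measurable X"
    and h_meas: "\<And>l. (\<lambda>(y, v). hh l (tuple_list l y) v) \<in> borel_measurable (PiM {..<l} (\<lambda>_. X) \<Otimes>\<^sub>M borel)"
    and h_range: "\<And>l ys v. length ys = l \<Longrightarrow> set ys \<subseteq> space X \<Longrightarrow> hh l ys v \<in> {0..1}"
    and h_cond: "is_cond_cdf X Prior \<phi> j r (hh j)"
    and f: "strategy X f"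
  defines "M \<equiv> iid_experiment X Prior (j + 1 + r)"
  defines "Fz \<equiv> (\<lambda>\<omega>. ecdf (map (\<lambda>q. \<phi> (\<omega> q)) [j+1..<j+1+r]) (\<phi> (\<omega> j)))"
  shows "(\<integral>\<omega>. (hh j (tuple_list j \<omega>) (\<phi> (\<omega> j)) - Fz \<omega>)\<^sup>2 \<partial>M)
       \<le> (\<integral>\<omega>. (hh (length (f (tuple_list j \<omega>))) (f (tuple_list j \<omega>)) (\<phi> (\<omega> j)) - Fz \<omega>)\<^sup>2 \<partial>M)"
proof -
  let ?N = "j + 1 + r"
  let ?P = "PiM {..<?N} (\<lambda>_. X)"
  have Pr: "Prior \<in> space (prob_algebra (prob_algebra X))"
    using prior by (simp add: space_prob_algebra)
  have K: "(\<lambda>D. PiM {..<?N} (\<lambda>_. D)) \<in> prob_algebra X \<rightarrow>\<^sub>M prob_algebra ?P"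
    by (rule iid_meas) simp
  have pM: "prob_space M" unfolding M_def iid_experiment_def by (rule prob_space_bind'[OF Pr K])
  have sM: "sets M = sets ?P" unfolding M_def iid_experiment_def by (rule sets_bind'[OF Pr K])
  have spM: "space M = space ?P" using sets_eq_imp_space_eq[OF sM] .
  define V where "V = (\<lambda>\<omega>. (list_tuple j (tuple_list j \<omega>), \<phi> (\<omega> j)))"
  let ?T = "PiM {..<j} (\<lambda>_. X) \<Otimes>\<^sub>M borel"
  have lt: "list_tuple j (tuple_list j \<omega>) = restrict \<omega> {..<j}" for \<omega> :: "nat \<Rightarrow> 'a"
    unfolding list_tuple_def tuple_list_def by (auto simp: restrict_def fun_eq_iff)
  have Vm: "V \<in> measurable ?P ?T"
    unfolding V_def lt
    by (intro measurable_Pair measurable_restrict_subset comp_meas phi_meas) auto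
  have VmM: "V \<in> measurable M ?T" using Vm by (simp add: measurable_cong_sets[OF sM refl])
  define G where "G = vimage_algebra (space M) V ?T"
  have sub: "subalgebra M G"
  proof -
    have "V \<in> space M \<rightarrow> space ?T" using measurable_space[OF VmM] by auto
    then have "sets G = {V -` A \<inter> space M | A. A \<in> sets ?T}"
      unfolding G_def by (rule sets_vimage_algebra2)
    then have "sets G \<subseteq> sets M" using measurable_sets[OF VmM] by auto
    then show ?thesis unfolding subalgebra_def G_def by simp
  qed
  have VG: "V \<in> measurable G ?T"
    unfolding G_def by (rule measurable_vimage_algebra1) (use measurable_space[OF VmM] in auto)
  have tl_sp: "set (tuple_list j \<omega>) \<subseteq> space X" if "\<omega> \<in> space M" for \<omega>
    using that unfolding spM by (auto simp: tuple_list_def space_PiM PiE_iff)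
  have Ftl: "tuple_list j (fst (V \<omega>)) = tuple_list j \<omega>" for \<omega>
    unfolding V_def by (simp add: tuple_list_list_tuple)
  define a where "a \<omega> = hh j (tuple_list j \<omega>) (\<phi> (\<omega> j))" for \<omega>
  have am: "a \<in> borel_measurable G"
  proof -
    have "(\<lambda>\<omega>. (\<lambda>(y, v). hh j (tuple_list j y) v) (V \<omega>)) \<in> borel_measurable G"
      by (rule measurable_compose[OF VG h_meas])
    moreover have "(\<lambda>\<omega>. (\<lambda>(y, v). hh j (tuple_list j y) v) (V \<omega>)) = a"
      unfolding a_def by (auto simp: fun_eq_iff case_prod_beta Ftl) (simp add: V_def)
    ultimately show ?thesis by simp
  qed
  define g where "g \<omega> = hh (length (f (tuple_list j \<omega>))) (f (tuple_list j \<omega>)) (\<phi> (\<omega> j))" for \<omega>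
  have gm: "g \<in> borel_measurable G"
  proof -
    have "(\<lambda>\<omega>. (\<lambda>(y, v). hh (length (f (tuple_list j y))) (f (tuple_list j y)) v) (V \<omega>)) \<in> borel_measurable G"
      by (rule measurable_compose[OF VG strategy_dep[OF f h_meas]])
    moreover have "(\<lambda>\<omega>. (\<lambda>(y, v). hh (length (f (tuple_list j y))) (f (tuple_list j y)) v) (V \<omega>)) = g"
      unfolding g_def by (auto simp: fun_eq_iff case_prod_beta Ftl) (simp add: V_def)
    ultimately show ?thesis by simp
  qed
  have ab: "\<bar>a \<omega>\<bar> \<le> 1" if "\<omega> \<in> space M" for \<omega>
    using h_range[OF length_tuple_list tl_sp[OF that], of "\<phi> (\<omega> j)"] unfolding a_def by auto
  have gb: "\<bar>g \<omega>\<bar> \<le> 1" if "\<omega> \<in> space M" for \<omega>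
  proof -
    have fm: "(\<lambda>y. f (tuple_list j y)) \<in> measurable (PiM {..<j} (\<lambda>_. X)) (listM X)"
      using f unfolding strategy_def by blast
    have "restrict \<omega> {..<j} \<in> space (PiM {..<j} (\<lambda>_. X))"
      using measurable_space[OF measurable_restrict_subset[of "{..<j}" "{..<?N}" "\<lambda>_. X"]] that spM by auto
    from measurable_space[OF fm this] have "f (tuple_list j \<omega>) \<in> lists (space X)"
      using lt[of \<omega>, symmetric] tuple_list_list_tuple[of "tuple_list j \<omega>" j]
      by (simp add: space_listM)
    then have "set (f (tuple_list j \<omega>)) \<subseteq> space X" by auto
    from h_range[OF refl this, of "\<phi> (\<omega> j)"] show ?thesis unfolding g_def by auto
  qed
  have Fm: "Fz \<in> borel_measurable M"
    unfolding Fz_def using Fz_meas[OF phi_meas, of j r] by (simp add: measurable_cong_sets[OF sM refl])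
  have Fb: "\<bar>Fz \<omega>\<bar> \<le> 1" for \<omega> unfolding Fz_def using ecdf_range by (metis abs_of_nonneg)
  have ae: "AE \<omega> in M. a \<omega> = real_cond_exp M G Fz \<omega>"
    using h_cond unfolding is_cond_cdf_def Let_def M_def[symmetric] G_def V_def Fz_def a_def .
  show ?thesis
    using cond_exp_ineq[OF pM sub Fm Fb am ab gm gb ae] unfolding a_def g_def .
qed



definition Gf :: "(nat \<Rightarrow> 'a \<Rightarrow> real) \<Rightarrow> (nat \<Rightarrow> nat \<Rightarrow> nat \<Rightarrow> 'a list \<Rightarrow> real \<Rightarrow> real) \<Rightarrow> ('a list \<Rightarrow> 'a list)
   \<Rightarrow> nat \<Rightarrow> nat \<Rightarrow> nat \<Rightarrow> (nat \<Rightarrow> 'a) \<Rightarrow> real" where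
  "Gf \<phi> h f j r k \<omega> = (h k (length (f (tuple_list j \<omega>))) r (f (tuple_list j \<omega>)) (\<phi> k (\<omega> j))
      - ecdf (map (\<lambda>q. \<phi> k (\<omega> q)) [j+1..<j+1+r]) (\<phi> k (\<omega> j)))\<^sup>2"

lemma avg_eq:
  assumes fsi: "fs i = f" and fsj: "\<forall>j. j \<noteq> i \<longrightarrow> fs j = id"
    and R: "length (idx m n i) \<ge> 1"
  shows "(let xs = (\<lambda>j. fs j (tuple_list (n j) (\<omega> j))) in
            (\<Sum>t<length (others m xs i). payment B K \<phi> h m xs i t) / real (length (others m xs i)))
       = B / real m - B / real m * (1 / real (length (idx m n i))) *
           (\<Sum>t<length (idx m n i). (1 / real K) * (\<Sum>k<K. Gf \<phi> h f (n i) (length (idx m n i) - 1) k (rho m n i t \<omega>)))"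
proof -
  define xs where "xs = (\<lambda>j. fs j (tuple_list (n j) (\<omega> j)))"
  define R where "R = length (idx m n i)"
  define Ob where "Ob = map (\<lambda>p. \<omega> (fst p) (snd p)) (idx m n i)"
  have oth: "others m xs i = Ob" unfolding xs_def Ob_def by (rule others_eq[OF fsj])
  have lO: "length Ob = R" unfolding Ob_def R_def by simp
  have xi: "xs i = f (tuple_list (n i) (\<omega> i))" unfolding xs_def fsi ..
  have pay: "payment B K \<phi> h m xs i t = B / real m * (1 - (1 / real K) * (\<Sum>k<K. Gf \<phi> h f (n i) (R - 1) k (rho m n i t \<omega>)))"
    if t: "t < R" for t
  proof -
    have tt: "t < length (idx m n i)" using t R_def by simp
    note rp = rho_props[OF tt, where \<omega>=\<omega>]
    have lZ: "length (remove_at t Ob) = R - 1" using t lO by (simp add: length_remove_at)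
    have "Gf \<phi> h f (n i) (R - 1) k (rho m n i t \<omega>) =
        (h k (length (xs i)) (length (remove_at t Ob)) (xs i) (\<phi> k (Ob ! t))
          - ecdf (map (\<phi> k) (remove_at t Ob)) (\<phi> k (Ob ! t)))\<^sup>2" for k
      unfolding Gf_def lZ xi using rp(1) rp(2) rp(3)[where g="\<phi> k"] unfolding Ob_def R_def by simp
    then show ?thesis
      unfolding payment_def loss_def oth Let_def by simp
  qed
  have "(\<Sum>t<R. payment B K \<phi> h m xs i t) = (\<Sum>t<R. B / real m - B / real m * ((1 / real K) * (\<Sum>k<K. Gf \<phi> h f (n i) (R - 1) k (rho m n i t \<omega>))))"
    by (rule sum.cong) (auto simp: pay algebra_simps)
  also have "\<dots> = real R * (B / real m) - B / real m * (\<Sum>t<R. (1 / real K) * (\<Sum>k<K. Gf \<phi> h f (n i) (R - 1) k (rho m n i t \<omega>)))"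
    by (simp add: sum_subtractf sum_distrib_left)
  finally have sumeq: "(\<Sum>t<R. payment B K \<phi> h m xs i t) = real R * (B / real m) - B / real m * (\<Sum>t<R. (1 / real K) * (\<Sum>k<K. Gf \<phi> h f (n i) (R - 1) k (rho m n i t \<omega>)))" .
  have alg: "S / r = a - a * (1 / r) * T" if "r > 0" "S = r * a - a * T" for S r a T :: real
    using that by (simp add: field_simps)
  have "(\<Sum>t<R. payment B K \<phi> h m xs i t) / real R = B / real m - B / real m * (1 / real R) *
           (\<Sum>t<R. (1 / real K) * (\<Sum>k<K. Gf \<phi> h f (n i) (R - 1) k (rho m n i t \<omega>)))"
    by (rule alg[OF _ sumeq]) (use R R_def in auto)
  then show ?thesis unfolding xs_def[symmetric] Let_def oth lO R_def .
qed



lemma lt_restrict: "list_tuple j (tuple_list j \<omega>) = restrict \<omega> {..<j}"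
  unfolding list_tuple_def tuple_list_def by (auto simp: restrict_def fun_eq_iff)

lemma Gf_meas:
  fixes X :: "'a measure"
  assumes phi: "\<phi> k \<in> borel_measurable X"
    and hm: "\<And>l. (\<lambda>(y, v). h k l r (tuple_list l y) v) \<in> borel_measurable (PiM {..<l} (\<lambda>_. X) \<Otimes>\<^sub>M borel)"
    and f: "strategy X f"
  shows "Gf \<phi> h f j r k \<in> borel_measurable (PiM {..<j+1+r} (\<lambda>_. X))"
proof -
  let ?P = "PiM {..<j+1+r} (\<lambda>_. X)"
  define V where "V = (\<lambda>\<omega>. (list_tuple j (tuple_list j \<omega>), \<phi> k (\<omega> j)))"
  have Vm: "V \<in> measurable ?P (PiM {..<j} (\<lambda>_. X) \<Otimes>\<^sub>M borel)"
    unfolding V_def lt_restrict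
    by (intro measurable_Pair measurable_restrict_subset comp_meas phi) auto
  have "(\<lambda>\<omega>. (\<lambda>(y, v). h k (length (f (tuple_list j y))) r (f (tuple_list j y)) v) (V \<omega>)) \<in> borel_measurable ?P"
    by (rule measurable_compose[OF Vm strategy_dep[OF f hm]])
  moreover have "(\<lambda>\<omega>. (\<lambda>(y, v). h k (length (f (tuple_list j y))) r (f (tuple_list j y)) v) (V \<omega>))
     = (\<lambda>\<omega>. h k (length (f (tuple_list j \<omega>))) r (f (tuple_list j \<omega>)) (\<phi> k (\<omega> j)))"
    unfolding V_def by (simp add: tuple_list_list_tuple)
  ultimately have gm: "(\<lambda>\<omega>. h k (length (f (tuple_list j \<omega>))) r (f (tuple_list j \<omega>)) (\<phi> k (\<omega> j))) \<in> borel_measurable ?P"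
    by simp
  have Fm: "(\<lambda>\<omega>. ecdf (map (\<lambda>q. \<phi> k (\<omega> q)) [j+1..<j+1+r]) (\<phi> k (\<omega> j))) \<in> borel_measurable ?P"
    by (rule Fz_meas[OF phi])
  show ?thesis unfolding Gf_def[abs_def] using gm Fm by measurable
qed

lemma Gf_bound:
  fixes X :: "'a measure"
  assumes h_range: "\<And>l ys v. length ys = l \<Longrightarrow> set ys \<subseteq> space X \<Longrightarrow> h k l r ys v \<in> {0..1}"
    and f: "strategy X f"
    and \<omega>: "\<omega> \<in> space (PiM {..<j+1+r} (\<lambda>_. X))"
  shows "0 \<le> Gf \<phi> h f j r k \<omega> \<and> Gf \<phi> h f j r k \<omega> \<le> 1"
proof -
  have fm: "(\<lambda>y. f (tuple_list j y)) \<in> measurable (PiM {..<j} (\<lambda>_. X)) (listM X)"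
    using f unfolding strategy_def by blast
  have "restrict \<omega> {..<j} \<in> space (PiM {..<j} (\<lambda>_. X))"
    using measurable_space[OF measurable_restrict_subset[of "{..<j}" "{..<j+1+r}" "\<lambda>_. X"] \<omega>] by auto
  from measurable_space[OF fm this] have "f (tuple_list j \<omega>) \<in> lists (space X)"
    using lt_restrict[of j \<omega>, symmetric] tuple_list_list_tuple[of "tuple_list j \<omega>" j]
    by (simp add: space_listM)
  then have "set (f (tuple_list j \<omega>)) \<subseteq> space X" by auto
  from h_range[OF refl this] have "h k (length (f (tuple_list j \<omega>))) r (f (tuple_list j \<omega>)) (\<phi> k (\<omega> j)) \<in> {0..1}" .
  moreover note ecdf_range[of "map (\<lambda>q. \<phi> k (\<omega> q)) [j+1..<j+1+r]" "\<phi> k (\<omega> j)"]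
  ultimately show ?thesis unfolding Gf_def by (auto simp: abs_square_le_1)
qed

lemma inner_eq:
  fixes X :: "'a measure" and D :: "'a measure"
  assumes D: "prob_space D" "sets D = sets X"
    and i: "i < m"
    and fsi: "fs i = f" and fsj: "\<forall>j. j \<noteq> i \<longrightarrow> fs j = id"
    and R: "length (idx m n i) \<ge> 1"
    and phi: "\<And>k. k < K \<Longrightarrow> \<phi> k \<in> borel_measurable X"
    and hm: "\<And>k l. k < K \<Longrightarrow> (\<lambda>(y, v). h k l (length (idx m n i) - 1) (tuple_list l y) v) \<in> borel_measurable (PiM {..<l} (\<lambda>_. X) \<Otimes>\<^sub>M borel)"
    and h_range: "\<And>k l ys v. k < K \<Longrightarrow> length ys = l \<Longrightarrow> set ys \<subseteq> space X \<Longrightarrow> h k l (length (idx m n i) - 1) ys v \<in> {0..1}"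
    and f: "strategy X f"
  shows "(\<integral>\<omega>. (let xs = (\<lambda>j. fs j (tuple_list (n j) (\<omega> j))) in
            (\<Sum>t<length (others m xs i). payment B K \<phi> h m xs i t) / real (length (others m xs i)))
          \<partial>(PiM {..<m} (\<lambda>j. PiM {..<n j} (\<lambda>_. D))))
       = B / real m - B / real m * ((1 / real K) *
           (\<Sum>k<K. \<integral>\<omega>. Gf \<phi> h f (n i) (length (idx m n i) - 1) k \<omega> \<partial>(PiM {..<n i + 1 + (length (idx m n i) - 1)} (\<lambda>_. D))))"
proof -
  define R where "R = length (idx m n i)"
  define r where "r = R - 1"
  define N where "N = n i + 1 + r"
  define Q where "Q = PiM {..<m} (\<lambda>j. PiM {..<n j} (\<lambda>_. D))"
  define PD where "PD = PiM {..<N} (\<lambda>_. D)"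
  define I where "I k = (\<integral>\<omega>. Gf \<phi> h f (n i) r k \<omega> \<partial>PD)" for k
  have pQ: "prob_space Q" unfolding Q_def by (intro prob_space_PiM) (use D in auto)
  have sPD: "sets PD = sets (PiM {..<N} (\<lambda>_. X))" unfolding PD_def by (rule sets_PiM_cong) (use D in auto)
  have spPD: "space PD = space (PiM {..<N} (\<lambda>_. X))" using sets_eq_imp_space_eq[OF sPD] .
  have Gm: "Gf \<phi> h f (n i) r k \<in> borel_measurable PD" if "k < K" for k
    using Gf_meas[where \<phi>=\<phi> and h=h and k=k and r=r and X=X and f=f and j="n i", OF phi[OF that] hm[OF that, folded R_def r_def] f]
    by (simp add: measurable_cong_sets[OF sPD refl] N_def)
  have Gb: "\<bar>Gf \<phi> h f (n i) r k \<omega>\<bar> \<le> 1" if "k < K" "\<omega> \<in> space PD" for k \<omega>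
    using Gf_bound[where h=h and k=k and r=r and X=X and f=f and j="n i" and \<omega>=\<omega> and \<phi>=\<phi>, OF h_range[OF that(1), folded R_def r_def] f] that(2) unfolding spPD N_def by auto
  have LtN: "length (Lt m n i t) = N" if "t < R" for t
    using that length_Lt[of t m n i] R unfolding N_def r_def R_def by simp
  have rho_eq: "rho m n i t = (\<lambda>\<omega>. \<lambda>q\<in>{..<length (Lt m n i t)}. \<omega> (fst (Lt m n i t ! q)) (snd (Lt m n i t ! q)))" for t
    unfolding rho_def[abs_def] ..
  have rho_m: "rho m n i t \<in> measurable Q PD" if "t < R" for t
    using flatten_measurable[OF set_Lt[of t m n i], of D] that i LtN[OF that]
    unfolding rho_eq Q_def PD_def R_def by simp
  have rho_d: "distr Q PD (rho m n i t) = PD" if "t < R" for t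
    using distr_flatten[OF distinct_Lt set_Lt D(1), of t m n i] that i LtN[OF that]
    unfolding rho_eq Q_def PD_def R_def by simp
  have intQ: "integrable Q (\<lambda>\<omega>. Gf \<phi> h f (n i) r k (rho m n i t \<omega>))"
    and intQ_eq: "(\<integral>\<omega>. Gf \<phi> h f (n i) r k (rho m n i t \<omega>) \<partial>Q) = I k"
    if "t < R" "k < K" for t k
  proof -
    interpret PD: prob_space PD unfolding PD_def by (intro prob_space_PiM) (use D in auto)
    have iPD: "integrable PD (Gf \<phi> h f (n i) r k)"
      by (rule PD.integrable_const_bound[where B=1]) (use Gm[OF that(2)] Gb[OF that(2)] in auto)
    show "integrable Q (\<lambda>\<omega>. Gf \<phi> h f (n i) r k (rho m n i t \<omega>))"
      using iPD integrable_distr_eq[OF rho_m[OF that(1)] Gm[OF that(2)]] rho_d[OF that(1)] by simp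
    show "(\<integral>\<omega>. Gf \<phi> h f (n i) r k (rho m n i t \<omega>) \<partial>Q) = I k"
      unfolding I_def using integral_distr[OF rho_m[OF that(1)] Gm[OF that(2)]] rho_d[OF that(1)] by simp
  qed
  have "(\<integral>\<omega>. (let xs = (\<lambda>j. fs j (tuple_list (n j) (\<omega> j))) in
            (\<Sum>t<length (others m xs i). payment B K \<phi> h m xs i t) / real (length (others m xs i))) \<partial>Q)
      = (\<integral>\<omega>. B / real m - B / real m * (1 / real R) *
           (\<Sum>t<R. (1 / real K) * (\<Sum>k<K. Gf \<phi> h f (n i) r k (rho m n i t \<omega>))) \<partial>Q)"
    using avg_eq[OF fsi fsj R] unfolding R_def r_def by simp
  also have "\<dots> = B / real m - B / real m * (1 / real R) * (\<integral>\<omega>. (\<Sum>t<R. (1 / real K) * (\<Sum>k<K. Gf \<phi> h f (n i) r k (rho m n i t \<omega>))) \<partial>Q)"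
  proof -
    interpret Q: prob_space Q by (rule pQ)
    have iS: "integrable Q (\<lambda>\<omega>. \<Sum>t<R. (1 / real K) * (\<Sum>k<K. Gf \<phi> h f (n i) r k (rho m n i t \<omega>)))"
      using intQ by (intro Bochner_Integration.integrable_sum integrable_mult_right) auto
    show ?thesis using iS by (simp add: Q.prob_space)
  qed
  also have "(\<integral>\<omega>. (\<Sum>t<R. (1 / real K) * (\<Sum>k<K. Gf \<phi> h f (n i) r k (rho m n i t \<omega>))) \<partial>Q)
      = (\<Sum>t<R. (1 / real K) * (\<Sum>k<K. I k))"
  proof -
    have "(\<integral>\<omega>. (\<Sum>t<R. (1 / real K) * (\<Sum>k<K. Gf \<phi> h f (n i) r k (rho m n i t \<omega>))) \<partial>Q)
        = (\<Sum>t<R. \<integral>\<omega>. (1 / real K) * (\<Sum>k<K. Gf \<phi> h f (n i) r k (rho m n i t \<omega>)) \<partial>Q)"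
      using intQ by (intro Bochner_Integration.integral_sum integrable_mult_right Bochner_Integration.integrable_sum) auto
    also have "\<dots> = (\<Sum>t<R. (1 / real K) * (\<Sum>k<K. \<integral>\<omega>. Gf \<phi> h f (n i) r k (rho m n i t \<omega>) \<partial>Q))"
      using intQ by (intro sum.cong refl) (simp add: Bochner_Integration.integral_sum)
    also have "\<dots> = (\<Sum>t<R. (1 / real K) * (\<Sum>k<K. I k))"
      using intQ_eq by (intro sum.cong refl) auto
    finally show ?thesis .
  qed
  finally have "(\<integral>\<omega>. (let xs = (\<lambda>j. fs j (tuple_list (n j) (\<omega> j))) in
            (\<Sum>t<length (others m xs i). payment B K \<phi> h m xs i t) / real (length (others m xs i))) \<partial>Q)
      = B / real m - B / real m * (1 / real R) * (real R * ((1 / real K) * (\<Sum>k<K. I k)))"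
    by simp
  also have "\<dots> = B / real m - B / real m * ((1 / real K) * (\<Sum>k<K. I k))"
    using R R_def by (cases "idx m n i") auto
  finally show ?thesis unfolding Q_def I_def PD_def N_def r_def R_def .
qed



lemma lin_avg:
  assumes Q: "prob_space Q" and G: "\<And>k. k < K \<Longrightarrow> integrable Q (G k)"
  shows "(\<integral>\<omega>. c - c * ((1 / real K) * (\<Sum>k<K. G k \<omega>)) \<partial>Q) = c - c * ((1 / real K) * (\<Sum>k<K. \<integral>\<omega>. G k \<omega> \<partial>Q))"
proof -
  interpret prob_space Q by (rule Q)
  have iS: "integrable Q (\<lambda>\<omega>. \<Sum>k<K. G k \<omega>)" using G by (intro Bochner_Integration.integrable_sum) auto
  have "(\<integral>\<omega>. c - c * ((1 / real K) * (\<Sum>k<K. G k \<omega>)) \<partial>Q) = c - c * ((1 / real K) * (\<integral>\<omega>. (\<Sum>k<K. G k \<omega>) \<partial>Q))"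
    using iS by (simp add: prob_space)
  also have "(\<integral>\<omega>. (\<Sum>k<K. G k \<omega>) \<partial>Q) = (\<Sum>k<K. \<integral>\<omega>. G k \<omega> \<partial>Q)"
    using G by (intro Bochner_Integration.integral_sum) auto
  finally show ?thesis .
qed

lemma avg_range:
  assumes "\<And>k. k < K \<Longrightarrow> 0 \<le> a k \<and> a k \<le> (1::real)"
  shows "0 \<le> (1 / real K) * (\<Sum>k<K. a k) \<and> (1 / real K) * (\<Sum>k<K. a k) \<le> 1"
proof -
  have "(\<Sum>k<K. a k) \<le> (\<Sum>k<K. 1)" by (rule sum_mono) (use assms in auto)
  moreover have "0 \<le> (\<Sum>k<K. a k)" by (rule sum_nonneg) (use assms in auto)
  ultimately show ?thesis by (cases "K = 0") (auto simp: field_simps)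
qed

lemma ep_formula:
  fixes X :: "'a measure" and Prior :: "'a measure measure"
  assumes prior: "prob_space Prior" "sets Prior = sets (prob_algebra X)"
    and i: "i < m"
    and fsi: "fs i = f" and fsj: "\<forall>j. j \<noteq> i \<longrightarrow> fs j = id"
    and R: "length (idx m n i) \<ge> 1"
    and phi: "\<And>k. k < K \<Longrightarrow> \<phi> k \<in> borel_measurable X"
    and hm: "\<And>k l. k < K \<Longrightarrow> (\<lambda>(y, v). h k l (length (idx m n i) - 1) (tuple_list l y) v) \<in> borel_measurable (PiM {..<l} (\<lambda>_. X) \<Otimes>\<^sub>M borel)"
    and h_range: "\<And>k l ys v. k < K \<Longrightarrow> length ys = l \<Longrightarrow> set ys \<subseteq> space X \<Longrightarrow> h k l (length (idx m n i) - 1) ys v \<in> {0..1}"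
    and f: "strategy X f"
  shows "expected_payment Prior m n fs B K \<phi> h i
     = B / real m - B / real m * ((1 / real K) *
         (\<Sum>k<K. \<integral>\<omega>. Gf \<phi> h f (n i) (length (idx m n i) - 1) k \<omega> \<partial>(iid_experiment X Prior (n i + 1 + (length (idx m n i) - 1)))))"
proof -
  define r where "r = length (idx m n i) - 1"
  define N where "N = n i + 1 + r"
  define P where "P = PiM {..<N} (\<lambda>_. X)"
  define M where "M = iid_experiment X Prior N"
  define c where "c = B / real m"
  define \<Phi> where "\<Phi> \<omega> = c - c * ((1 / real K) * (\<Sum>k<K. Gf \<phi> h f (n i) r k \<omega>))" for \<omega>
  have Pr: "Prior \<in> space (prob_algebra (prob_algebra X))"
    using prior by (simp add: space_prob_algebra)
  have K0: "(\<lambda>D. PiM {..<N} (\<lambda>_. D)) \<in> prob_algebra X \<rightarrow>\<^sub>M prob_algebra P"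
    unfolding P_def by (rule iid_meas) simp
  have Kmap: "(\<lambda>D. PiM {..<N} (\<lambda>_. D)) \<in> Prior \<rightarrow>\<^sub>M subprob_algebra P"
    using measurable_prob_algebraD[OF K0] by (simp add: measurable_cong_sets[OF prior(2) refl])
  have pM: "prob_space M" unfolding M_def iid_experiment_def by (rule prob_space_bind'[OF Pr K0])
  have sM: "sets M = sets P" unfolding M_def iid_experiment_def by (rule sets_bind'[OF Pr K0])
  have spPr: "space Prior = space (prob_algebra X)" using sets_eq_imp_space_eq[OF prior(2)] .
  have Gm: "Gf \<phi> h f (n i) r k \<in> borel_measurable P" if "k < K" for k
    using Gf_meas[where \<phi>=\<phi> and h=h and k=k and r=r and X=X and f=f and j="n i", OF phi[OF that] hm[OF that, folded r_def] f]
    by (simp add: P_def N_def)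
  have Gb: "0 \<le> Gf \<phi> h f (n i) r k \<omega> \<and> Gf \<phi> h f (n i) r k \<omega> \<le> 1" if "k < K" "\<omega> \<in> space P" for k \<omega>
    using Gf_bound[where h=h and k=k and r=r and X=X and f=f and j="n i" and \<omega>=\<omega> and \<phi>=\<phi>, OF h_range[OF that(1), folded r_def] f] that(2)
    unfolding P_def N_def by auto
  have intG: "integrable Q (Gf \<phi> h f (n i) r k)" if "prob_space Q" "sets Q = sets P" "k < K" for Q k
  proof -
    interpret Q: prob_space Q by (rule that(1))
    show ?thesis
    proof (rule Q.integrable_const_bound[where B=1])
      show "Gf \<phi> h f (n i) r k \<in> borel_measurable Q" using Gm[OF that(3)] by (simp add: measurable_cong_sets[OF that(2) refl])
      show "AE x in Q. norm (Gf \<phi> h f (n i) r k x) \<le> 1"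
        using Gb[OF that(3)] sets_eq_imp_space_eq[OF that(2)] by (intro AE_I2) auto
    qed
  qed
  have \<Phi>m: "\<Phi> \<in> borel_measurable P" unfolding \<Phi>_def using Gm
    by (intro borel_measurable_diff borel_measurable_const borel_measurable_times borel_measurable_sum) auto
  have \<Phi>b: "\<bar>\<Phi> \<omega>\<bar> \<le> \<bar>c\<bar>" if "\<omega> \<in> space P" for \<omega>
  proof -
    have s: "0 \<le> (1 / real K) * (\<Sum>k<K. Gf \<phi> h f (n i) r k \<omega>) \<and> (1 / real K) * (\<Sum>k<K. Gf \<phi> h f (n i) r k \<omega>) \<le> 1"
      by (rule avg_range) (use Gb that in auto)
    have "\<Phi> \<omega> = c * (1 - (1 / real K) * (\<Sum>k<K. Gf \<phi> h f (n i) r k \<omega>))" unfolding \<Phi>_def by (simp add: algebra_simps)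
    then have "\<bar>\<Phi> \<omega>\<bar> = \<bar>c\<bar> * \<bar>1 - (1 / real K) * (\<Sum>k<K. Gf \<phi> h f (n i) r k \<omega>)\<bar>" by (simp add: abs_mult)
    also have "\<dots> \<le> \<bar>c\<bar> * 1" using s by (intro mult_left_mono) auto
    finally show ?thesis by simp
  qed
  have inner: "(\<integral>\<omega>. (let xs = (\<lambda>j. fs j (tuple_list (n j) (\<omega> j))) in
            (\<Sum>t<length (others m xs i). payment B K \<phi> h m xs i t) / real (length (others m xs i)))
          \<partial>(PiM {..<m} (\<lambda>j. PiM {..<n j} (\<lambda>_. D)))) = (\<integral>\<omega>. \<Phi> \<omega> \<partial>(PiM {..<N} (\<lambda>_. D)))"
    if D: "D \<in> space Prior" for D
  proof -
    have D': "prob_space D" "sets D = sets X" using D spPr by (auto simp: space_prob_algebra)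
    have pD: "prob_space (PiM {..<N} (\<lambda>_. D))" by (intro prob_space_PiM) (use D' in auto)
    have sD: "sets (PiM {..<N} (\<lambda>_. D)) = sets P" unfolding P_def by (rule sets_PiM_cong) (use D' in auto)
    have e1: "(\<integral>\<omega>. (let xs = (\<lambda>j. fs j (tuple_list (n j) (\<omega> j))) in
            (\<Sum>t<length (others m xs i). payment B K \<phi> h m xs i t) / real (length (others m xs i)))
          \<partial>(PiM {..<m} (\<lambda>j. PiM {..<n j} (\<lambda>_. D))))
       = B / real m - B / real m * ((1 / real K) *
           (\<Sum>k<K. \<integral>\<omega>. Gf \<phi> h f (n i) (length (idx m n i) - 1) k \<omega> \<partial>(PiM {..<n i + 1 + (length (idx m n i) - 1)} (\<lambda>_. D))))"
      by (rule inner_eq[where X=X and D=D and i=i and m=m and fs=fs and f=f and n=n and K=K and \<phi>=\<phi> and h=h and B=B, OF D' i fsi fsj R phi hm h_range f])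
    have e2: "(\<integral>\<omega>. \<Phi> \<omega> \<partial>(PiM {..<N} (\<lambda>_. D))) = c - c * ((1 / real K) * (\<Sum>k<K. \<integral>\<omega>. Gf \<phi> h f (n i) r k \<omega> \<partial>(PiM {..<N} (\<lambda>_. D))))"
      unfolding \<Phi>_def by (rule lin_avg[OF pD intG[OF pD sD]])
    show ?thesis using e1 e2 unfolding c_def r_def N_def by simp
  qed
  have "expected_payment Prior m n fs B K \<phi> h i = (\<integral>D. (\<integral>\<omega>. \<Phi> \<omega> \<partial>(PiM {..<N} (\<lambda>_. D))) \<partial>Prior)"
    unfolding expected_payment_def by (rule Bochner_Integration.integral_cong[OF refl inner])
  also have "\<dots> = (\<integral>\<omega>. \<Phi> \<omega> \<partial>M)"
  proof -
    have fin: "finite_measure Prior" using prior(1) by (simp add: prob_space_def)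
    have "AE D in Prior. emeasure (PiM {..<N} (\<lambda>_. D)) (space (PiM {..<N} (\<lambda>_. D))) \<le> ennreal 1"
    proof (rule AE_I2)
      fix D assume "D \<in> space Prior"
      then have "prob_space D" using spPr by (auto simp: space_prob_algebra)
      then have "prob_space (PiM {..<N} (\<lambda>_. D))" by (intro prob_space_PiM) auto
      then show "emeasure (PiM {..<N} (\<lambda>_. D)) (space (PiM {..<N} (\<lambda>_. D))) \<le> ennreal 1"
        by (simp add: prob_space.emeasure_space_1)
    qed
    from integral_bind[OF \<Phi>m \<Phi>b Kmap fin this] show ?thesis
      unfolding M_def iid_experiment_def by simp
  qed
  also have "\<dots> = c - c * ((1 / real K) * (\<Sum>k<K. \<integral>\<omega>. Gf \<phi> h f (n i) r k \<omega> \<partial>M))"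
    unfolding \<Phi>_def by (rule lin_avg[OF pM intG[OF pM sM]])
  finally show ?thesis unfolding c_def M_def N_def r_def .
qed



lemma loss_range:
  assumes h_range: "\<And>k j r ys v. k < K \<Longrightarrow> r \<ge> 1 \<Longrightarrow> length ys = j \<Longrightarrow> set ys \<subseteq> space X \<Longrightarrow>
        h k j r ys v \<in> {0..1}"
    and xs: "set (xs i) \<subseteq> space X" and len: "2 \<le> length (others m xs i)" "t < length (others m xs i)"
  shows "0 \<le> loss K \<phi> h m xs i t \<and> loss K \<phi> h m xs i t \<le> 1"
proof -
  define T where "T = others m xs i ! t"
  define Z where "Z = remove_at t (others m xs i)"
  have lZ: "length Z \<ge> 1" using len unfolding Z_def by (simp add: length_remove_at)
  define a where "a k = (h k (length (xs i)) (length Z) (xs i) (\<phi> k T) - ecdf (map (\<phi> k) Z) (\<phi> k T))\<^sup>2" for k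
  have a: "0 \<le> a k \<and> a k \<le> 1" if "k < K" for k
  proof -
    have "h k (length (xs i)) (length Z) (xs i) (\<phi> k T) \<in> {0..1}"
      using h_range[OF that lZ refl xs] .
    moreover have "0 \<le> ecdf (map (\<phi> k) Z) (\<phi> k T) \<and> ecdf (map (\<phi> k) Z) (\<phi> k T) \<le> 1"
      by (rule ecdf_range)
    ultimately show ?thesis unfolding a_def
      by (auto simp: abs_square_le_1)
  qed
  have l: "loss K \<phi> h m xs i t = (1 / real K) * (\<Sum>k<K. a k)"
    unfolding loss_def a_def T_def Z_def Let_def by simp
  have "(\<Sum>k<K. a k) \<le> (\<Sum>k<K. 1)" by (rule sum_mono) (use a in auto)
  moreover have "0 \<le> (\<Sum>k<K. a k)" by (rule sum_nonneg) (use a in auto)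
  ultimately show ?thesis unfolding l by (cases "K = 0") (auto simp: field_simps)
qed

theorem mainTheorem11:
  fixes X :: "'a measure" and Prior :: "'a measure measure"
    and m K :: nat and n :: "nat \<Rightarrow> nat" and B :: real
    and \<phi> :: "nat \<Rightarrow> 'a \<Rightarrow> real"
    and h :: "nat \<Rightarrow> nat \<Rightarrow> nat \<Rightarrow> 'a list \<Rightarrow> real \<Rightarrow> real"
  assumes m2: "m \<ge> 2"
    and Bpos: "B > 0"
    and prior: "prob_space Prior" "sets Prior = sets (prob_algebra X)"
    and phi_meas: "\<And>k. k < K \<Longrightarrow> \<phi> k \<in> borel_measurable X"
    and h_meas: "\<And>k j r. k < K \<Longrightarrow> r \<ge> 1 \<Longrightarrow>
        (\<lambda>(y, v). h k j r (tuple_list j y) v) \<in> borel_measurable (PiM {..<j} (\<lambda>_. X) \<Otimes>\<^sub>M borel)"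
    and h_range: "\<And>k j r ys v. k < K \<Longrightarrow> r \<ge> 1 \<Longrightarrow> length ys = j \<Longrightarrow> set ys \<subseteq> space X \<Longrightarrow>
        h k j r ys v \<in> {0..1}"
    and h_cond: "\<And>k j r. k < K \<Longrightarrow> r \<ge> 1 \<Longrightarrow> is_cond_cdf X Prior (\<phi> k) j r (h k j r)"
    and sizes: "\<And>i. i < m \<Longrightarrow> (\<Sum>j\<in>{..<m} - {i}. n j) \<ge> 2"
  shows "(\<forall>xs t. (\<forall>j<m. set (xs j) \<subseteq> space X) \<longrightarrow>
              (\<forall>i<m. 2 \<le> length (others m xs i) \<and> t i < length (others m xs i)) \<longrightarrow>
              (\<forall>i<m. payment B K \<phi> h m xs i (t i) \<ge> 0) \<and>
              (\<Sum>i<m. payment B K \<phi> h m xs i (t i)) \<le> B)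
       \<and> (\<forall>i<m. \<forall>f. strategy X f \<longrightarrow>
              expected_payment Prior m n (\<lambda>_. id) B K \<phi> h i
                \<ge> expected_payment Prior m n (\<lambda>j. if j = i then f else id) B K \<phi> h i)"
proof (rule conjI, intro allI impI)
  fix xs :: "nat \<Rightarrow> 'a list" and t :: "nat \<Rightarrow> nat"
  assume xs: "\<forall>j<m. set (xs j) \<subseteq> space X"
    and len: "\<forall>i<m. 2 \<le> length (others m xs i) \<and> t i < length (others m xs i)"
  have mpos: "real m > 0" using m2 by simp
  have pb: "0 \<le> payment B K \<phi> h m xs i (t i) \<and> payment B K \<phi> h m xs i (t i) \<le> B / real m" if i: "i < m" for i
  proof -
    have L: "0 \<le> loss K \<phi> h m xs i (t i) \<and> loss K \<phi> h m xs i (t i) \<le> 1"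
      by (rule loss_range[where X=X]) (use h_range xs len i in auto)
    have c: "0 \<le> B / real m" using Bpos mpos by simp
    have "0 \<le> B / real m * (1 - loss K \<phi> h m xs i (t i))" using c L by (intro mult_nonneg_nonneg) auto
    moreover have "B / real m * (1 - loss K \<phi> h m xs i (t i)) \<le> B / real m * 1" using c L by (intro mult_left_mono) auto
    ultimately show ?thesis by (simp add: payment_def)
  qed
  have P1: "\<forall>i<m. payment B K \<phi> h m xs i (t i) \<ge> 0" using pb by auto
  have "(\<Sum>i<m. payment B K \<phi> h m xs i (t i)) \<le> (\<Sum>i<m. B / real m)"
    by (rule sum_mono) (use pb in auto)
  also have "\<dots> = B" using mpos by simp
  finally show "(\<forall>i<m. payment B K \<phi> h m xs i (t i) \<ge> 0) \<and> (\<Sum>i<m. payment B K \<phi> h m xs i (t i)) \<le> B"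
    using P1 by simp
next
  show "\<forall>i<m. \<forall>f. strategy X f \<longrightarrow>
              expected_payment Prior m n (\<lambda>_. id) B K \<phi> h i
                \<ge> expected_payment Prior m n (\<lambda>j. if j = i then f else id) B K \<phi> h i"
  proof (intro allI impI)
    fix i f assume i: "i < m" and f: "strategy X f"
    define R where "R = length (idx m n i)"
    define r where "r = R - 1"
    have R2: "R \<ge> 2" unfolding R_def length_idx using sizes[OF i] .
    have r1: "r \<ge> 1" using R2 unfolding r_def by simp
    have R1: "length (idx m n i) \<ge> 1" using R2 R_def by simp
    have hm: "\<And>k l. k < K \<Longrightarrow> (\<lambda>(y, v). h k l (length (idx m n i) - 1) (tuple_list l y) v) \<in> borel_measurable (PiM {..<l} (\<lambda>_. X) \<Otimes>\<^sub>M borel)"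
      using h_meas r1 unfolding r_def R_def by blast
    have hr: "\<And>k l ys v. k < K \<Longrightarrow> length ys = l \<Longrightarrow> set ys \<subseteq> space X \<Longrightarrow> h k l (length (idx m n i) - 1) ys v \<in> {0..1}"
      using h_range r1 unfolding r_def R_def by blast
    define M where "M = iid_experiment X Prior (n i + 1 + r)"
    have e_id: "expected_payment Prior m n (\<lambda>_. id) B K \<phi> h i
      = B / real m - B / real m * ((1 / real K) * (\<Sum>k<K. \<integral>\<omega>. Gf \<phi> h id (n i) r k \<omega> \<partial>M))"
      unfolding M_def r_def R_def
      by (rule ep_formula[where X=X and Prior=Prior and i=i and m=m and n=n and fs="\<lambda>_. id" and f=id and K=K and \<phi>=\<phi> and h=h and B=B, OF prior i _ _ R1 phi_meas hm hr strategy_id]) auto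
    have e_f: "expected_payment Prior m n (\<lambda>j. if j = i then f else id) B K \<phi> h i
      = B / real m - B / real m * ((1 / real K) * (\<Sum>k<K. \<integral>\<omega>. Gf \<phi> h f (n i) r k \<omega> \<partial>M))"
      unfolding M_def r_def R_def
      by (rule ep_formula[where X=X and Prior=Prior and i=i and m=m and n=n and fs="\<lambda>j. if j = i then f else id" and f=f and K=K and \<phi>=\<phi> and h=h and B=B, OF prior i _ _ R1 phi_meas hm hr f]) auto
    have ineq: "(\<integral>\<omega>. Gf \<phi> h id (n i) r k \<omega> \<partial>M) \<le> (\<integral>\<omega>. Gf \<phi> h f (n i) r k \<omega> \<partial>M)" if k: "k < K" for k
    proof -
      have mi: "(\<integral>\<omega>. ((\<lambda>l ys v. h k l r ys v) (n i) (tuple_list (n i) \<omega>) (\<phi> k (\<omega> (n i)))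
                  - ecdf (map (\<lambda>q. \<phi> k (\<omega> q)) [n i+1..<n i+1+r]) (\<phi> k (\<omega> (n i))))\<^sup>2 \<partial>M)
       \<le> (\<integral>\<omega>. ((\<lambda>l ys v. h k l r ys v) (length (f (tuple_list (n i) \<omega>))) (f (tuple_list (n i) \<omega>)) (\<phi> k (\<omega> (n i)))
                  - ecdf (map (\<lambda>q. \<phi> k (\<omega> q)) [n i+1..<n i+1+r]) (\<phi> k (\<omega> (n i))))\<^sup>2 \<partial>M)"
        unfolding M_def
        by (rule main_ineq[where \<phi>="\<phi> k" and hh="\<lambda>l ys v. h k l r ys v", OF prior phi_meas[OF k]
              h_meas[OF k r1] h_range[OF k r1] h_cond[OF k r1] f])
      then show ?thesis unfolding Gf_def by simp
    qed
    have "(1 / real K) * (\<Sum>k<K. \<integral>\<omega>. Gf \<phi> h id (n i) r k \<omega> \<partial>M) \<le> (1 / real K) * (\<Sum>k<K. \<integral>\<omega>. Gf \<phi> h f (n i) r k \<omega> \<partial>M)"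
      by (intro mult_left_mono sum_mono ineq) auto
    then have "B / real m * ((1 / real K) * (\<Sum>k<K. \<integral>\<omega>. Gf \<phi> h id (n i) r k \<omega> \<partial>M))
        \<le> B / real m * ((1 / real K) * (\<Sum>k<K. \<integral>\<omega>. Gf \<phi> h f (n i) r k \<omega> \<partial>M))"
      by (rule mult_left_mono) (use Bpos in simp)
    then show "expected_payment Prior m n (\<lambda>j. if j = i then f else id) B K \<phi> h i
        \<le> expected_payment Prior m n (\<lambda>_. id) B K \<phi> h i"
      unfolding e_id e_f by linarith
  qed
qed


end
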